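(* Let $E=k[[x_1,x_2]]((\partial_1^{-1}))((\partial_2^{-1}))$ act on the right on $V=k((z_1))((z_2))$ as in the context, and let $W_l\subset V$ be the closed subspace topologically generated by the monomials $z_1^nz_2^m$ with $n\le0$, $m\in\mathbb Z$ (so $W_l=k[z_1^{-1}]((z_2))$). Put $E_+^l=\{A\in E: W_lA\subseteq W_l\}$ and $E_-^l=k[[x_1,x_2]]\partial_1^{-1}[[\partial_1^{-1}]]((\partial_2^{-1}))$. Then $E_+^l$ is an associative ring with unity, $E_+^l=k[[x_1,x_2]][\partial_1]((\partial_2^{-1}))$, and $E=E_+^l\oplus E_-^l$ as abelian groups.
   Context: $k$ is a field of characteristic zero, $\partial_i=\partial/\partial x_i$. $E$ is the ring of formal pseudo-differential operators: iterated formal Laurent series in $\partial_1^{-1}$ and then $\partial_2^{-1}$ with coefficients in $k[[x_1,x_2]]$ written on the left, multiplied by the Leibniz rule $\partial_i^{n}a=\sum_{j\ge0}\binom{n}{j}\partial_i^j(a)\partial_i^{n-j}$ for all $n\in\mathbb Z$, $\binom{n}{j}=n(n-1)\cdots(n-j+1)/j!$. The right action of $E$ on $V$ is via $E/(x_1E+x_2E)\simeq V$, the class of $p\,\partial_1^i\partial_2^j$ ($p\in k[[x_1,x_2]]$) corresponding to $p(0,0)z_1^{-i}z_2^{-j}$. $V$ carries the standard two-dimensional local field topology (base of neighbourhoods of zero: $\{\sum a_iz_2^i: a_i\in U_i\}$ for neighbourhoods $U_i$ of $0$ in $k((z_1))$, $U_i=k((z_1))$ for $i\gg0$, where $k$ is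 discrete). *)

theory Defs
  imports "HOL-Computational_Algebra.Formal_Power_Series" "HOL-Algebra.Ring"
begin

text \<open>k[[x1,x2]] is rendered as 'a fps fps (outer variable x2, inner variable x1).\<close>

definition pd1 :: "'a::comm_ring_1 fps fps \<Rightarrow> 'a fps fps" where
  "pd1 f = Abs_fps (\<lambda>n. fps_deriv (fps_nth f n))"

definition pd2 :: "'a::comm_ring_1 fps fps \<Rightarrow> 'a fps fps" where
  "pd2 f = fps_deriv f"

definition pval0 :: "'a::comm_ring_1 fps fps \<Rightarrow> 'a" where
  "pval0 f = fps_nth (fps_nth f 0) 0"

text \<open>An element of E is represented by its coefficient function:
  A i j is the coefficient (written on the left) of d1^i d2^j.\<close>
type_synonym 'a psido = "int \<Rightarrow> int \<Rightarrow> 'a fps fps"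

definition PsiDO :: "'a::comm_ring_1 psido set" where
  "PsiDO = {A. (\<exists>N. \<forall>i j. j > N \<longrightarrow> A i j = 0) \<and>
               (\<forall>j. \<exists>M. \<forall>i. i > M \<longrightarrow> A i j = 0)}"

definition ezero :: "'a::comm_ring_1 psido" where
  "ezero = (\<lambda>i j. 0)"

definition eone :: "'a::comm_ring_1 psido" where
  "eone = (\<lambda>i j. if i = 0 \<and> j = 0 then 1 else 0)"

definition eadd :: "'a::comm_ring_1 psido \<Rightarrow> 'a psido \<Rightarrow> 'a psido" where
  "eadd A B = (\<lambda>i j. A i j + B i j)"

text \<open>Multiplication by the Leibniz rule:
  (a d1^i d2^j)(b d1^p d2^q) = sum_{s,t} a (i gchoose s)(j gchoose t) d1^s d2^t(b) d1^(i+p-s) d2^(j+q-t).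
  For elements of PsiDO the index set below is finite.\<close>
definition emul_idx :: "'a::comm_ring_1 psido \<Rightarrow> 'a psido \<Rightarrow> int \<Rightarrow> int \<Rightarrow> (int \<times> int \<times> nat \<times> nat) set" where
  "emul_idx A B u v = {x. A (fst x) (fst (snd x)) \<noteq> 0 \<and>
       B (u - fst x + int (fst (snd (snd x)))) (v - fst (snd x) + int (snd (snd (snd x)))) \<noteq> 0}"

definition emul :: "'a::field_char_0 psido \<Rightarrow> 'a psido \<Rightarrow> 'a psido" where
  "emul A B = (\<lambda>u v.
     \<Sum>(i, j, s, t) \<in> emul_idx A B u v.
        A i j * fps_const (fps_const ((of_int i gchoose s) * (of_int j gchoose t)))
              * (pd1 ^^ s) ((pd2 ^^ t) (B (u - i + int s) (v - j + int t))))"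

text \<open>V = k((z1))((z2)); v n m is the coefficient of z1^n z2^m.\<close>
definition Vsp :: "(int \<Rightarrow> int \<Rightarrow> 'a::zero) set" where
  "Vsp = {v. (\<exists>M. \<forall>n m. m < M \<longrightarrow> v n m = 0) \<and>
             (\<forall>m. \<exists>N. \<forall>n. n < N \<longrightarrow> v n m = 0)}"

text \<open>The isomorphism E/(x1 E + x2 E) = V: class of p d1^i d2^j goes to p(0,0) z1^-i z2^-j.
  lift chooses the representative with constant coefficients.\<close>
definition proj :: "'a::comm_ring_1 psido \<Rightarrow> (int \<Rightarrow> int \<Rightarrow> 'a)" where
  "proj A = (\<lambda>n m. pval0 (A (- n) (- m)))"

definition lift :: "(int \<Rightarrow> int \<Rightarrow> 'a::comm_ring_1) \<Rightarrow> 'a psido" where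
  "lift v = (\<lambda>i j. fps_const (fps_const (v (- i) (- j))))"

definition ract :: "(int \<Rightarrow> int \<Rightarrow> 'a::field_char_0) \<Rightarrow> 'a psido \<Rightarrow> (int \<Rightarrow> int \<Rightarrow> 'a)" where
  "ract v A = proj (emul (lift v) A)"

definition Wl :: "(int \<Rightarrow> int \<Rightarrow> 'a::zero) set" where
  "Wl = {v \<in> Vsp. \<forall>n m. n > 0 \<longrightarrow> v n m = 0}"

definition Eplus :: "'a::field_char_0 psido set" where
  "Eplus = {A \<in> PsiDO. \<forall>v \<in> Wl. ract v A \<in> Wl}"

definition Epoly :: "'a::comm_ring_1 psido set" where
  "Epoly = {A \<in> PsiDO. \<forall>i j. i < 0 \<longrightarrow> A i j = 0}"

definition Eminus :: "'a::comm_ring_1 psido set" where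
  "Eminus = {A \<in> PsiDO. \<forall>i j. i \<ge> 0 \<longrightarrow> A i j = 0}"

definition Eplus_ring :: "'a::field_char_0 psido ring" where
  "Eplus_ring = \<lparr>carrier = Eplus, monoid.mult = emul, one = eone, zero = ezero, add = eadd\<rparr>"

definition E_addgroup :: "'a::field_char_0 psido monoid" where
  "E_addgroup = \<lparr>carrier = PsiDO, monoid.mult = eadd, one = ezero\<rparr>"

end

theory Submission
  imports Defs "HOL-Library.Groups_Big_Fun"
begin

notation fps_nth (infixl \<open>$\<close> 75)

definition sc :: "'a::comm_ring_1 \<Rightarrow> 'a fps fps" where
  "sc c = fps_const (fps_const c)"

lemma sc_mult: "sc (a * b) = sc a * sc b" by (simp add: sc_def fps_const_mult)
lemma sc_add: "sc (a + b) = sc a + sc b" by (simp add: sc_def fps_const_add)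
lemma sc_1[simp]: "sc 1 = 1" by (simp add: sc_def)
lemma sc_0[simp]: "sc 0 = 0" by (simp add: sc_def)
lemma sc_sum: "sc (sum f S) = (\<Sum>x\<in>S. sc (f x))"
  by (induction S rule: infinite_finite_induct) (auto simp: sc_add)
lemma sc_of_nat: "sc (of_nat n) = of_nat n" by (simp add: sc_def fps_of_nat)

definition deriv_op :: "('a::comm_ring_1 fps fps \<Rightarrow> 'a fps fps) \<Rightarrow> bool" where
  "deriv_op d \<longleftrightarrow> (\<forall>f g. d (f + g) = d f + d g) \<and> (\<forall>f g. d (f * g) = d f * g + f * d g)
     \<and> (\<forall>c f. d (sc c * f) = sc c * d f)"

lemma deriv_op_add: "deriv_op d \<Longrightarrow> d (f + g) = d f + d g" unfolding deriv_op_def by blast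
lemma deriv_op_mult: "deriv_op d \<Longrightarrow> d (f * g) = d f * g + f * d g" unfolding deriv_op_def by blast
lemma deriv_op_sc: "deriv_op d \<Longrightarrow> d (sc c * f) = sc c * d f" unfolding deriv_op_def by blast
lemma deriv_op_0: "deriv_op d \<Longrightarrow> d 0 = 0"
  using deriv_op_add[of d 0 0] by simp

lemma funpow_add_op: "deriv_op d \<Longrightarrow> (d ^^ n) (f + g) = (d ^^ n) f + (d ^^ n) g"
  by (induction n) (auto simp: deriv_op_add)
lemma funpow_0_op: "deriv_op d \<Longrightarrow> (d ^^ n) 0 = 0"
  by (induction n) (auto simp: deriv_op_0)
lemma funpow_sc_op: "deriv_op d \<Longrightarrow> (d ^^ n) (sc c * f) = sc c * (d ^^ n) f"
  by (induction n) (auto simp: deriv_op_sc)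
lemma funpow_sum_op: "deriv_op d \<Longrightarrow> (d ^^ n) (sum f S) = (\<Sum>x\<in>S. (d ^^ n) (f x))"
  by (induction S rule: infinite_finite_induct) (auto simp: funpow_add_op funpow_0_op)

lemma leibniz:
  assumes "deriv_op d"
  shows "(d ^^ n) (f * g) = (\<Sum>k\<le>n. sc (of_nat (n choose k)) * ((d ^^ k) f * (d ^^ (n - k)) g))"
proof (induction n)
  case 0 then show ?case by simp
next
  case (Suc n)
  have "(d ^^ Suc n) (f * g) = d (\<Sum>k\<le>n. sc (of_nat (n choose k)) * ((d ^^ k) f * (d ^^ (n - k)) g))"
    using Suc by simp
  also have "\<dots> = (\<Sum>k\<le>n. sc (of_nat (n choose k)) * ((d ^^ Suc k) f * (d ^^ (n - k)) g))
      + (\<Sum>k\<le>n. sc (of_nat (n choose k)) * ((d ^^ k) f * (d ^^ Suc (n - k)) g))"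
  proof -
    have "d (\<Sum>k\<le>n. sc (of_nat (n choose k)) * ((d ^^ k) f * (d ^^ (n - k)) g))
       = (\<Sum>k\<le>n. d (sc (of_nat (n choose k)) * ((d ^^ k) f * (d ^^ (n - k)) g)))"
      using funpow_sum_op[OF assms, of 1] by simp
    then show ?thesis using assms
      by (simp add: deriv_op_sc deriv_op_mult distrib_left sum.distrib)
  qed
  also have "\<dots> = (\<Sum>k\<le>Suc n. sc (of_nat (Suc n choose k)) * ((d ^^ k) f * (d ^^ (Suc n - k)) g))"
  proof -
    have A: "(\<Sum>k\<le>n. sc (of_nat (n choose k)) * ((d ^^ Suc k) f * (d ^^ (n - k)) g))
        = (\<Sum>k\<le>Suc n. sc (of_nat (if k = 0 then 0 else n choose (k - 1))) * ((d ^^ k) f * (d ^^ (Suc n - k)) g))"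
      by (simp add: sum.atMost_Suc_shift binomial_eq_0 del: sum.atMost_Suc)
    have B: "(\<Sum>k\<le>n. sc (of_nat (n choose k)) * ((d ^^ k) f * (d ^^ Suc (n - k)) g))
        = (\<Sum>k\<le>Suc n. sc (of_nat (n choose k)) * ((d ^^ k) f * (d ^^ (Suc n - k)) g))"
      by (simp add: Suc_diff_le binomial_eq_0)
    show ?thesis unfolding A B sum.distrib[symmetric]
    proof (rule sum.cong[OF refl])
      fix k assume "k \<in> {..Suc n}"
      show "sc (of_nat (if k = 0 then 0 else n choose (k - 1))) * ((d ^^ k) f * (d ^^ (Suc n - k)) g) +
         sc (of_nat (n choose k)) * ((d ^^ k) f * (d ^^ (Suc n - k)) g) =
         sc (of_nat (Suc n choose k)) * ((d ^^ k) f * (d ^^ (Suc n - k)) g)"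
      proof (cases k)
        case 0 then show ?thesis by simp
      next
        case (Suc m)
        have "sc (of_nat (n choose m)) + sc (of_nat (n choose Suc m)) = (sc (of_nat (Suc n choose k)) :: 'a fps fps)"
          unfolding Suc binomial_Suc_Suc sc_add[symmetric] by simp
        then show ?thesis unfolding Suc by (simp add: distrib_right[symmetric])
      qed
    qed
  qed
  finally show ?case .
qed

lemma pd1_nth[simp]: "pd1 f $ n = fps_deriv (f $ n)" by (simp add: pd1_def)

lemma deriv_op_pd1: "deriv_op (pd1 :: 'a::comm_ring_1 fps fps \<Rightarrow> _)"
  unfolding deriv_op_def
proof (intro conjI allI)
  fix f g :: "'a fps fps"
  show "pd1 (f + g) = pd1 f + pd1 g" by (rule fps_ext) simp
  show "pd1 (f * g) = pd1 f * g + f * pd1 g"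
    by (rule fps_ext) (simp add: fps_mult_nth fps_deriv_sum sum.distrib)
  fix c :: 'a
  show "pd1 (sc c * f) = sc c * pd1 f"
    by (rule fps_ext) (simp add: sc_def)
qed

lemma deriv_op_pd2: "deriv_op (pd2 :: 'a::comm_ring_1 fps fps \<Rightarrow> _)"
  unfolding deriv_op_def pd2_def by (simp add: sc_def)

lemma pd1_pd2: "pd1 (pd2 f) = pd2 (pd1 f)"
  unfolding pd2_def
  by (rule fps_ext) (simp add: fps_deriv_nth fps_of_nat[symmetric] del: fps_of_nat)

lemma pd1_pd2_funpow: "(pd2 ^^ b) ((pd1 ^^ a) f) = (pd1 ^^ a) ((pd2 ^^ b) f)"
proof -
  have 1: "pd2 ((pd1 ^^ a) f) = (pd1 ^^ a) (pd2 f)" for f :: "'a fps fps"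
    by (induction a) (simp_all add: pd1_pd2[symmetric])
  show ?thesis by (induction b) (auto simp: 1)
qed

definition D :: "nat \<Rightarrow> nat \<Rightarrow> 'a::comm_ring_1 fps fps \<Rightarrow> 'a fps fps" where
  "D s t f = (pd1 ^^ s) ((pd2 ^^ t) f)"

lemma D_D: "D a b (D c e f) = D (a + c) (b + e) f"
  unfolding D_def by (simp add: pd1_pd2_funpow funpow_add)

lemma D_00[simp]: "D 0 0 f = f" by (simp add: D_def)
lemma D_add: "D s t (f + g) = D s t f + D s t g"
  by (simp add: D_def funpow_add_op deriv_op_pd1 deriv_op_pd2)
lemma D_0[simp]: "D s t 0 = 0"
  by (simp add: D_def funpow_0_op deriv_op_pd1 deriv_op_pd2)
lemma D_sc: "D s t (sc c * f) = sc c * D s t f"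
  by (simp add: D_def funpow_sc_op deriv_op_pd1 deriv_op_pd2)
lemma D_sum: "D s t (sum f S) = (\<Sum>x\<in>S. D s t (f x))"
  by (simp add: D_def funpow_sum_op deriv_op_pd1 deriv_op_pd2)
lemma D_neg: "D s t (- f) = - D s t f"
  by (metis D_add D_0 add.right_inverse minus_unique)

lemma D_leibniz:
  "D s t (f * g) = (\<Sum>\<sigma>\<le>s. \<Sum>\<tau>\<le>t. sc (of_nat (s choose \<sigma>) * of_nat (t choose \<tau>)) *
      (D \<sigma> \<tau> f * D (s - \<sigma>) (t - \<tau>) g))"
proof -
  have "D s t (f * g) = (pd1 ^^ s) (\<Sum>\<tau>\<le>t. sc (of_nat (t choose \<tau>)) * ((pd2 ^^ \<tau>) f * (pd2 ^^ (t - \<tau>)) g))"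
    unfolding D_def by (simp add: leibniz[OF deriv_op_pd2])
  also have "\<dots> = (\<Sum>\<tau>\<le>t. sc (of_nat (t choose \<tau>)) * (\<Sum>\<sigma>\<le>s. sc (of_nat (s choose \<sigma>)) *
       (D \<sigma> \<tau> f * D (s - \<sigma>) (t - \<tau>) g)))"
    unfolding funpow_sum_op[OF deriv_op_pd1]
    by (rule sum.cong[OF refl], subst funpow_sc_op[OF deriv_op_pd1], simp only: leibniz[OF deriv_op_pd1] D_def)
  also have "\<dots> = (\<Sum>\<tau>\<le>t. \<Sum>\<sigma>\<le>s. sc (of_nat (s choose \<sigma>) * of_nat (t choose \<tau>)) *
      (D \<sigma> \<tau> f * D (s - \<sigma>) (t - \<tau>) g))"
    by (simp add: sum_distrib_left sc_mult mult_ac)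
  finally show ?thesis by (simp add: sum.swap[of _ "{..s}"])
qed

lemma deriv_funpow_nth:
  "of_nat (fact n) * ((fps_deriv ^^ t) (f :: 'b::comm_ring_1 fps)) $ n = of_nat (fact (n + t)) * f $ (n + t)"
proof (induction t arbitrary: n f)
  case 0 then show ?case by simp
next
  case (Suc t)
  have "of_nat (fact n) * ((fps_deriv ^^ Suc t) f) $ n = of_nat (fact n) * ((fps_deriv ^^ t) (fps_deriv f)) $ n"
    by (simp add: funpow_Suc_right del: funpow.simps)
  also have "\<dots> = of_nat (fact (n + t)) * (of_nat (n + t + 1) * f $ (n + t + 1))"
    using Suc by simp
  also have "\<dots> = of_nat (fact (n + Suc t)) * f $ (n + Suc t)"
    by (simp add: algebra_simps)
  finally show ?case .
qed

lemma deriv_funpow_nth0: "((fps_deriv ^^ t) (f :: 'b::comm_ring_1 fps)) $ 0 = of_nat (fact t) * f $ t"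
  using deriv_funpow_nth[of 0 t f] by simp

lemma pd1_funpow_nth: "((pd1 ^^ s) h) $ n = (fps_deriv ^^ s) (h $ n)"
  by (induction s) auto

lemma pd2_funpow: "(pd2 :: 'a::comm_ring_1 fps fps \<Rightarrow> _) ^^ t = fps_deriv ^^ t"
proof -
  have "(pd2 :: 'a::comm_ring_1 fps fps \<Rightarrow> _) = fps_deriv" by (rule ext) (simp add: pd2_def)
  then show ?thesis by simp
qed

lemma pval0_D: "pval0 (D s t f) = of_nat (fact s) * of_nat (fact t) * (f $ t) $ s"
proof -
  have "pval0 (D s t f) = ((fps_deriv ^^ s) (((fps_deriv ^^ t) f) $ 0)) $ 0"
    by (simp add: pval0_def D_def pd1_funpow_nth pd2_funpow)
  also have "\<dots> = of_nat (fact s) * (of_nat (fact t) * f $ t) $ s"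
    by (simp add: deriv_funpow_nth0)
  also have "\<dots> = of_nat (fact s) * of_nat (fact t) * (f $ t) $ s"
    by (simp add: fps_of_nat[symmetric] del: fps_of_nat)
  finally show ?thesis .
qed

lemma pd1_1: "pd1 1 = 0"
  by (rule fps_ext) (simp add: fps_one_nth)

lemma D_1: "D s t 1 = (if s = 0 \<and> t = 0 then 1 else 0)"
proof -
  have 1: "(pd2 ^^ t) 1 = (if t = 0 then 1 else 0)"
    by (cases t) (simp_all add: funpow_Suc_right funpow_0_op[OF deriv_op_pd2] pd2_def del: funpow.simps)
  have 2: "(pd1 ^^ s) 1 = (if s = 0 then 1 else 0)"
    by (cases s) (simp_all add: funpow_Suc_right funpow_0_op[OF deriv_op_pd1] pd1_1 del: funpow.simps)
  show ?thesis unfolding D_def 1 by (simp add: 2 funpow_0_op[OF deriv_op_pd1])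
qed

lemma gchoose_int_zero:
  assumes "0 \<le> i" "i < int s"
  shows "(of_int i gchoose s :: 'a::field_char_0) = 0"
proof -
  obtain n where n: "i = int n" using assms(1) nonneg_int_cases by blast
  have "(of_int i gchoose s :: 'a) = of_nat (n choose s)" unfolding n by (simp add: binomial_gbinomial)
  then show ?thesis using assms n by (simp add: binomial_eq_0)
qed

lemma psido_N: "A \<in> PsiDO \<Longrightarrow> \<exists>N. \<forall>i j. j > N \<longrightarrow> A i j = 0"
  by (auto simp: PsiDO_def)

lemma psido_M:
  assumes "A \<in> PsiDO"
  shows "\<exists>M. \<forall>i j. j \<ge> L \<longrightarrow> i > M \<longrightarrow> A i j = 0"
proof -
  obtain N where N: "\<forall>i j. j > N \<longrightarrow> A i j = 0" using psido_N[OF assms] by blast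
  have "\<forall>j. \<exists>M. \<forall>i. i > M \<longrightarrow> A i j = 0" using assms by (auto simp: PsiDO_def)
  then obtain Mf where Mf: "\<And>i j. i > Mf j \<Longrightarrow> A i j = 0" by metis
  define M where "M = (\<Sum>j\<in>{L..N}. \<bar>Mf j\<bar>)"
  have "A i j = 0" if "j \<ge> L" "i > M" for i j
  proof (cases "j > N")
    case True then show ?thesis using N by blast
  next
    case False
    then have "j \<in> {L..N}" using that by auto
    then have "\<bar>Mf j\<bar> \<le> M" unfolding M_def by (intro member_le_sum) auto
    then show ?thesis using that Mf by (meson abs_ge_self le_less_trans order.strict_trans2)
  qed
  then show ?thesis by blast
qed

lemma master2:
  assumes "A \<in> PsiDO" "B \<in> PsiDO"
  shows "\<exists>R. \<forall>i j n1 n2. 0 \<le> n1 \<longrightarrow> 0 \<le> n2 \<longrightarrow> A i j \<noteq> 0 \<longrightarrow> B (u - i + n1) (v - j + n2) \<noteq> 0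
     \<longrightarrow> \<bar>i\<bar> \<le> R \<and> \<bar>j\<bar> \<le> R \<and> n1 \<le> R \<and> n2 \<le> R"
proof -
  obtain NA where NA: "\<forall>i j. j > NA \<longrightarrow> A i j = 0" using psido_N[OF assms(1)] by blast
  obtain NB where NB: "\<forall>i j. j > NB \<longrightarrow> B i j = 0" using psido_N[OF assms(2)] by blast
  obtain MA where MA: "\<forall>i j. j \<ge> v - NB \<longrightarrow> i > MA \<longrightarrow> A i j = 0" using psido_M[OF assms(1)] by blast
  obtain MB where MB: "\<forall>i j. j \<ge> v - NA \<longrightarrow> i > MB \<longrightarrow> B i j = 0" using psido_M[OF assms(2)] by blast
  define R where "R = \<bar>NA\<bar> + \<bar>NB\<bar> + \<bar>MA\<bar> + \<bar>MB\<bar> + \<bar>u\<bar> + \<bar>v\<bar>"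
  show ?thesis
  proof (intro exI allI impI)
    fix i j n1 n2 :: int
    assume h: "0 \<le> n1" "0 \<le> n2" "A i j \<noteq> 0" "B (u - i + n1) (v - j + n2) \<noteq> 0"
    have j1: "j \<le> NA" using NA h by (meson not_le)
    have j2: "v - j + n2 \<le> NB" using NB h by (meson not_le)
    have i1: "i \<le> MA" using MA h j2 by (smt (verit))
    have i2: "u - i + n1 \<le> MB" using MB h j1 by (smt (verit))
    show "\<bar>i\<bar> \<le> R \<and> \<bar>j\<bar> \<le> R \<and> n1 \<le> R \<and> n2 \<le> R"
      using j1 j2 i1 i2 h(1,2) unfolding R_def by linarith
  qed
qed

lemma D_nz: "D s t f \<noteq> 0 \<Longrightarrow> f \<noteq> 0" by auto

definition T :: "'a::field_char_0 psido \<Rightarrow> 'a psido \<Rightarrow> int \<Rightarrow> int \<Rightarrow> int \<times> int \<times> nat \<times> nat \<Rightarrow> 'a fps fps" where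
  "T A B u v = (\<lambda>(i, j, s, t). A i j * fps_const (fps_const ((of_int i gchoose s) * (of_int j gchoose t)))
              * (pd1 ^^ s) ((pd2 ^^ t) (B (u - i + int s) (v - j + int t))))"

lemma T_alt: "T A B u v (i, j, s, t) = A i j * sc ((of_int i gchoose s) * (of_int j gchoose t)) * D s t (B (u - i + int s) (v - j + int t))"
  by (simp add: T_def sc_def D_def)

lemma emul_T: "emul A B u v = sum (T A B u v) (emul_idx A B u v)"
  unfolding emul_def T_def by simp

lemma fin_box: "(\<And>x. f x \<noteq> 0 \<Longrightarrow> x \<in> S) \<Longrightarrow> finite S \<Longrightarrow> finite {x. f x \<noteq> 0}"
  by (metis (mono_tags, lifting) mem_Collect_eq rev_finite_subset subsetI)

lemma T_supp_fin:
  assumes "A \<in> PsiDO" "B \<in> PsiDO"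
  shows "finite {x. T A B u v x \<noteq> 0}"
proof -
  obtain R where R: "\<forall>i j n1 n2. 0 \<le> n1 \<longrightarrow> 0 \<le> n2 \<longrightarrow> A i j \<noteq> 0 \<longrightarrow> B (u - i + n1) (v - j + n2) \<noteq> 0
     \<longrightarrow> \<bar>i\<bar> \<le> R \<and> \<bar>j\<bar> \<le> R \<and> n1 \<le> R \<and> n2 \<le> R" using master2[OF assms] by blast
  show ?thesis
  proof (rule fin_box[where S = "{-R..R} \<times> {-R..R} \<times> {..nat R} \<times> {..nat R}"])
    fix x assume "T A B u v x \<noteq> 0"
    then obtain i j s t where x: "x = (i, j, s, t)" "A i j \<noteq> 0" "B (u - i + int s) (v - j + int t) \<noteq> 0"
      by (cases x) (auto simp: T_alt dest: D_nz)
    then show "x \<in> {-R..R} \<times> {-R..R} \<times> {..nat R} \<times> {..nat R}"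
      using R[rule_format, of "int s" "int t" i j] by auto
  qed auto
qed

lemma emul_idx_fin:
  assumes "A \<in> PsiDO" "B \<in> PsiDO"
  shows "finite (emul_idx A B u v)"
proof -
  obtain R where R: "\<forall>i j n1 n2. 0 \<le> n1 \<longrightarrow> 0 \<le> n2 \<longrightarrow> A i j \<noteq> 0 \<longrightarrow> B (u - i + n1) (v - j + n2) \<noteq> 0
     \<longrightarrow> \<bar>i\<bar> \<le> R \<and> \<bar>j\<bar> \<le> R \<and> n1 \<le> R \<and> n2 \<le> R" using master2[OF assms] by blast
  have "emul_idx A B u v \<subseteq> {-R..R} \<times> {-R..R} \<times> {..nat R} \<times> {..nat R}"
  proof
    fix x assume "x \<in> emul_idx A B u v"
    then obtain i j s t where x: "x = (i, j, s, t)" "A i j \<noteq> 0" "B (u - i + int s) (v - j + int t) \<noteq> 0"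
      by (cases x) (auto simp: emul_idx_def)
    then show "x \<in> {-R..R} \<times> {-R..R} \<times> {..nat R} \<times> {..nat R}"
      using R[rule_format, of "int s" "int t" i j] by auto
  qed
  then show ?thesis by (rule finite_subset) auto
qed

lemma emul_SA:
  assumes "A \<in> PsiDO" "B \<in> PsiDO"
  shows "emul A B u v = Sum_any (T A B u v)"
proof -
  have "{x. T A B u v x \<noteq> 0} \<subseteq> emul_idx A B u v"
    by (auto simp: T_alt emul_idx_def dest: D_nz)
  then show ?thesis unfolding emul_T
    using Sum_any.expand_superset[OF emul_idx_fin[OF assms]] by metis
qed

lemma SA_pair:
  assumes "finite {x. (case x of (a, b) \<Rightarrow> g a b) \<noteq> (0::'c::comm_monoid_add)}"
  shows "Sum_any (\<lambda>a. Sum_any (g a)) = Sum_any (\<lambda>(a, b). g a b)"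
proof -
  let ?S = "{x. (case x of (a, b) \<Rightarrow> g a b) \<noteq> 0}"
  have "{a. \<exists>b. g a b \<noteq> 0} \<times> {b. \<exists>a. g a b \<noteq> 0} \<subseteq> fst ` ?S \<times> snd ` ?S"
    by (auto simp: image_iff)
  moreover have "finite (fst ` ?S \<times> snd ` ?S)" using assms by simp
  ultimately show ?thesis using Sum_any.cartesian_product by blast
qed

lemma SA_reindex_inj:
  assumes "inj \<phi>" "\<And>x. x \<notin> range \<phi> \<Longrightarrow> F x = (0::'c::comm_monoid_add)"
  shows "Sum_any F = Sum_any (F \<circ> \<phi>)"
proof -
  have "{x. F x \<noteq> 0} = \<phi> ` {y. F (\<phi> y) \<noteq> 0}"
  proof (intro equalityI subsetI)
    fix x assume "x \<in> {x. F x \<noteq> 0}"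
    then have "x \<in> range \<phi>" using assms(2) by blast
    then obtain y where "x = \<phi> y" by blast
    then show "x \<in> \<phi> ` {y. F (\<phi> y) \<noteq> 0}" using \<open>x \<in> {x. F x \<noteq> 0}\<close> by auto
  qed auto
  then have "sum F {x. F x \<noteq> 0} = sum (F \<circ> \<phi>) {y. F (\<phi> y) \<noteq> 0}"
    by (simp add: sum.reindex inj_on_subset[OF assms(1)])
  then show ?thesis by (simp add: Sum_any.expand_set)
qed

lemma D_SA:
  assumes "finite {x. f x \<noteq> 0}"
  shows "D s t (Sum_any f) = Sum_any (\<lambda>x. D s t (f x))"
proof -
  have "D s t (Sum_any f) = (\<Sum>x\<in>{x. f x \<noteq> 0}. D s t (f x))"
    by (simp add: Sum_any.expand_set D_sum)
  also have "\<dots> = Sum_any (\<lambda>x. D s t (f x))"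
    by (rule Sum_any.expand_superset[symmetric]) (use assms in auto)
  finally show ?thesis .
qed

lemma SA_box:
  assumes "finite S" "\<And>x. x \<notin> S \<Longrightarrow> f x = 0"
  shows "Sum_any f = sum f (S :: 'b set)"
  by (rule Sum_any.expand_superset) (use assms in auto)

lemma bound_helper:
  fixes x :: int
  shows "\<exists>a. x \<le> a \<and> -x \<le> a \<and> 0 \<le> a"
  by (rule exI[of _ "\<bar>x\<bar>"]) auto

lemma master3:
  assumes "A \<in> PsiDO" "B \<in> PsiDO" "C \<in> PsiDO"
  shows "\<exists>R. \<forall>i j p q n1 n2. 0 \<le> n1 \<longrightarrow> 0 \<le> n2 \<longrightarrow> A i j \<noteq> 0 \<longrightarrow> B p q \<noteq> 0 \<longrightarrow>
     C (u - i - p + n1) (v - j - q + n2) \<noteq> 0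
     \<longrightarrow> \<bar>i\<bar> \<le> R \<and> \<bar>j\<bar> \<le> R \<and> \<bar>p\<bar> \<le> R \<and> \<bar>q\<bar> \<le> R \<and> n1 \<le> R \<and> n2 \<le> R"
proof -
  obtain NA where NA: "\<forall>i j. j > NA \<longrightarrow> A i j = 0" using psido_N[OF assms(1)] by blast
  obtain NB where NB: "\<forall>i j. j > NB \<longrightarrow> B i j = 0" using psido_N[OF assms(2)] by blast
  obtain NC where NC: "\<forall>i j. j > NC \<longrightarrow> C i j = 0" using psido_N[OF assms(3)] by blast
  obtain MA where MA: "\<forall>i j. j \<ge> v - NB - NC \<longrightarrow> i > MA \<longrightarrow> A i j = 0" using psido_M[OF assms(1)] by blast
  obtain MB where MB: "\<forall>i j. j \<ge> v - NA - NC \<longrightarrow> i > MB \<longrightarrow> B i j = 0" using psido_M[OF assms(2)] by blast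
  obtain MC where MC: "\<forall>i j. j \<ge> v - NA - NB \<longrightarrow> i > MC \<longrightarrow> C i j = 0" using psido_M[OF assms(3)] by blast
  obtain a1 where a1: "NA \<le> a1" "-NA \<le> a1" "0 \<le> a1" using bound_helper by blast
  obtain a2 where a2: "NB \<le> a2" "-NB \<le> a2" "0 \<le> a2" using bound_helper by blast
  obtain a3 where a3: "NC \<le> a3" "-NC \<le> a3" "0 \<le> a3" using bound_helper by blast
  obtain a4 where a4: "MA \<le> a4" "-MA \<le> a4" "0 \<le> a4" using bound_helper by blast
  obtain a5 where a5: "MB \<le> a5" "-MB \<le> a5" "0 \<le> a5" using bound_helper by blast
  obtain a6 where a6: "MC \<le> a6" "-MC \<le> a6" "0 \<le> a6" using bound_helper by blast
  obtain a7 where a7: "u \<le> a7" "-u \<le> a7" "0 \<le> a7" using bound_helper by blast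
  obtain a8 where a8: "v \<le> a8" "-v \<le> a8" "0 \<le> a8" using bound_helper by blast
  define R where "R = a1 + a2 + a3 + a4 + a5 + a6 + a7 + a8"
  show ?thesis
  proof (intro exI allI impI)
    fix i j p q n1 n2 :: int
    assume h: "0 \<le> n1" "0 \<le> n2" "A i j \<noteq> 0" "B p q \<noteq> 0" "C (u - i - p + n1) (v - j - q + n2) \<noteq> 0"
    have j1: "j \<le> NA" using NA h by (meson not_le)
    have q1: "q \<le> NB" using NB h by (meson not_le)
    have c1: "v - j - q + n2 \<le> NC" using NC h by (meson not_le)
    have "j \<ge> v - NB - NC" using q1 c1 h(2) by linarith
    then have i1: "i \<le> MA" using MA[rule_format, of j i] h(3) by linarith
    have "q \<ge> v - NA - NC" using j1 c1 h(2) by linarith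
    then have p1: "p \<le> MB" using MB[rule_format, of q p] h(4) by linarith
    have "v - j - q + n2 \<ge> v - NA - NB" using j1 q1 h(2) by linarith
    then have c2: "u - i - p + n1 \<le> MC" using MC[rule_format, of "v - j - q + n2" "u - i - p + n1"] h(5) by linarith
    have "i \<le> R \<and> -i \<le> R \<and> j \<le> R \<and> -j \<le> R \<and> p \<le> R \<and> -p \<le> R \<and> q \<le> R \<and> -q \<le> R \<and> n1 \<le> R \<and> n2 \<le> R"
      using j1 q1 c1 i1 p1 c2 h(1,2) a1 a2 a3 a4 a5 a6 a7 a8 unfolding R_def by linarith
    then show "\<bar>i\<bar> \<le> R \<and> \<bar>j\<bar> \<le> R \<and> \<bar>p\<bar> \<le> R \<and> \<bar>q\<bar> \<le> R \<and> n1 \<le> R \<and> n2 \<le> R"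
      by (simp add: abs_le_iff)
  qed
qed
lemma emul_closed:
  assumes "A \<in> PsiDO" "B \<in> PsiDO"
  shows "emul A B \<in> PsiDO"
proof -
  obtain NA where NA: "\<forall>i j. j > NA \<longrightarrow> A i j = 0" using psido_N[OF assms(1)] by blast
  obtain NB where NB: "\<forall>i j. j > NB \<longrightarrow> B i j = 0" using psido_N[OF assms(2)] by blast
  have 1: "emul A B u v = 0" if "v > NA + NB" for u v
  proof -
    have "T A B u v x = 0" for x
    proof (cases x)
      case (fields i j s t)
      show ?thesis
      proof (rule ccontr)
        assume "T A B u v x \<noteq> 0"
        then have "A i j \<noteq> 0" "B (u - i + int s) (v - j + int t) \<noteq> 0" by (auto simp: fields T_alt dest: D_nz)
        then have "j \<le> NA" "v - j + int t \<le> NB" using NA NB by (meson not_le)+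
        then show False using that by linarith
      qed
    qed
    then show ?thesis by (simp add: emul_T)
  qed
  have 2: "\<exists>M. \<forall>u. u > M \<longrightarrow> emul A B u v = 0" for v
  proof -
    obtain MA where MA: "\<forall>i j. j \<ge> v - NB \<longrightarrow> i > MA \<longrightarrow> A i j = 0" using psido_M[OF assms(1)] by blast
    obtain MB where MB: "\<forall>i j. j \<ge> v - NA \<longrightarrow> i > MB \<longrightarrow> B i j = 0" using psido_M[OF assms(2)] by blast
    have "emul A B u v = 0" if "u > MA + MB" for u
    proof -
      have "T A B u v x = 0" for x
      proof (cases x)
        case (fields i j s t)
        show ?thesis
        proof (rule ccontr)
          assume "T A B u v x \<noteq> 0"
          then have h: "A i j \<noteq> 0" "B (u - i + int s) (v - j + int t) \<noteq> 0" by (auto simp: fields T_alt dest: D_nz)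
          have "j \<le> NA" "v - j + int t \<le> NB" using h NA NB by (meson not_le)+
          then have "i \<le> MA" using h MA[rule_format, of j i] by linarith
          moreover have "u - i + int s \<le> MB" using h MB[rule_format, of "v - j + int t" "u - i + int s"] \<open>j \<le> NA\<close> by linarith
          ultimately show False using that by linarith
        qed
      qed
      then show ?thesis by (simp add: emul_T)
    qed
    then show ?thesis by blast
  qed
  show ?thesis unfolding PsiDO_def using 1 2 by blast
qed

lemma vand:
  "(of_int i gchoose s :: 'a::field_char_0) * (of_int i' gchoose s') =
   (\<Sum>l\<le>s'. (of_int i gchoose (s + l)) * of_nat ((s + l) choose s) * (of_int (i' - i + int s) gchoose (s' - l)))"
proof -
  have 1: "(of_int i gchoose (s + l) :: 'a) * of_nat ((s + l) choose s) = (of_int i gchoose s) * ((of_int i - of_nat s) gchoose l)" for l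
    using gbinomial_trinomial_revision[of s "s + l" "of_int i :: 'a"] by (simp add: binomial_gbinomial)
  have "(\<Sum>l\<le>s'. (of_int i gchoose (s + l)) * of_nat ((s + l) choose s) * (of_int (i' - i + int s) gchoose (s' - l)))
      = (of_int i gchoose s :: 'a) * (\<Sum>l\<in>{0..s'}. ((of_int i - of_nat s) gchoose l) * (of_int (i' - i + int s) gchoose (s' - l)))"
    by (simp add: 1 sum_distrib_left mult.assoc atMost_atLeast0)
  also have "\<dots> = (of_int i gchoose s) * ((of_int i - of_nat s + of_int (i' - i + int s)) gchoose s')"
    by (simp add: gbinomial_Vandermonde)
  also have "\<dots> = (of_int i gchoose s) * (of_int i' gchoose s')"
    by simp
  finally show ?thesis by simp
qed

definition Hf :: "'a::field_char_0 psido \<Rightarrow> 'a psido \<Rightarrow> 'a psido \<Rightarrow> int \<Rightarrow> int \<Rightarrow>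
   (int \<times> int \<times> nat \<times> nat) \<times> (int \<times> int \<times> nat \<times> nat) \<times> (nat \<times> nat) \<Rightarrow> 'a fps fps" where
  "Hf A B C u v = (\<lambda>((i', j', s', t'), (i, j, s, t), (l1, l2)).
     if l1 \<le> s' \<and> l2 \<le> t' then
       A i j * D s t (B (i' - i + int s) (j' - j + int t)) * D s' t' (C (u - i' + int s') (v - j' + int t')) *
       sc ((of_int i gchoose (s + l1)) * of_nat ((s + l1) choose s) * (of_int (i' - i + int s) gchoose (s' - l1)) *
           ((of_int j gchoose (t + l2)) * of_nat ((t + l2) choose t) * (of_int (j' - j + int t) gchoose (t' - l2))))
     else 0)"

lemma sum_prod_box:
  "(\<Sum>L\<in>{..a} \<times> {..b}. K * (f (fst L) * g (snd L))) = (K::'c::comm_semiring_1) * ((\<Sum>l\<le>a. f l) * (\<Sum>l\<le>b. g l))"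
proof -
  have "(\<Sum>L\<in>{..a} \<times> {..b}. K * (f (fst L) * g (snd L))) = (\<Sum>x\<le>a. \<Sum>y\<le>b. K * (f x * g y))"
    by (simp add: sum.cartesian_product split_def)
  also have "\<dots> = K * (\<Sum>x\<le>a. \<Sum>y\<le>b. f x * g y)" by (simp add: sum_distrib_left)
  also have "\<dots> = K * ((\<Sum>l\<le>a. f l) * (\<Sum>l\<le>b. g l))" by (simp add: sum_product)
  finally show ?thesis .
qed

lemma Hf_point:
  "T A B i' j' (i, j, s, t) * (sc ((of_int i' gchoose s') * (of_int j' gchoose t')) * D s' t' (C (u - i' + int s') (v - j' + int t')))
   = Sum_any (\<lambda>L. Hf A B C u v ((i', j', s', t'), (i, j, s, t), L))"
proof -
  let ?K = "A i j * D s t (B (i' - i + int s) (j' - j + int t)) * D s' t' (C (u - i' + int s') (v - j' + int t'))"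
  let ?a = "\<lambda>l1. (of_int i gchoose (s + l1)) * of_nat ((s + l1) choose s) * (of_int (i' - i + int s) gchoose (s' - l1))"
  let ?b = "\<lambda>l2. (of_int j gchoose (t + l2)) * of_nat ((t + l2) choose t) * (of_int (j' - j + int t) gchoose (t' - l2))"
  have "Sum_any (\<lambda>L. Hf A B C u v ((i', j', s', t'), (i, j, s, t), L)) = (\<Sum>L\<in>{..s'} \<times> {..t'}. Hf A B C u v ((i', j', s', t'), (i, j, s, t), L))"
    by (rule SA_box) (auto simp: Hf_def split: if_splits)
  also have "\<dots> = (\<Sum>L\<in>{..s'} \<times> {..t'}. ?K * (sc (?a (fst L)) * sc (?b (snd L))))"
    by (rule sum.cong) (auto simp: Hf_def sc_mult)
  also have "\<dots> = ?K * ((\<Sum>l1\<le>s'. sc (?a l1)) * (\<Sum>l2\<le>t'. sc (?b l2)))"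
    by (rule sum_prod_box)
  also have "\<dots> = ?K * (sc (\<Sum>l1\<le>s'. ?a l1) * sc (\<Sum>l2\<le>t'. ?b l2))"
    by (simp only: sc_sum)
  also have "\<dots> = ?K * (sc ((of_int i gchoose s) * (of_int i' gchoose s')) * sc ((of_int j gchoose t) * (of_int j' gchoose t')))"
    by (simp only: vand)
  also have "\<dots> = T A B i' j' (i, j, s, t) * (sc ((of_int i' gchoose s') * (of_int j' gchoose t')) * D s' t' (C (u - i' + int s') (v - j' + int t')))"
    by (simp add: T_alt sc_mult mult_ac)
  finally show ?thesis by simp
qed

definition Hg :: "'a::field_char_0 psido \<Rightarrow> 'a psido \<Rightarrow> 'a psido \<Rightarrow> int \<Rightarrow> int \<Rightarrow>
   (int \<times> int \<times> nat \<times> nat) \<times> (int \<times> int \<times> nat \<times> nat) \<times> (nat \<times> nat) \<Rightarrow> 'a fps fps" where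
  "Hg A B C u v = (\<lambda>((i, j, s, t), (p, q, r, w), (\<sigma>, \<tau>)).
     if \<sigma> \<le> s \<and> \<tau> \<le> t then
       A i j * D \<sigma> \<tau> (B p q) * D (s - \<sigma> + r) (t - \<tau> + w) (C (u - i + int s - p + int r) (v - j + int t - q + int w)) *
       sc ((of_int i gchoose s) * (of_int j gchoose t) * ((of_int p gchoose r) * (of_int q gchoose w)) *
           (of_nat (s choose \<sigma>) * of_nat (t choose \<tau>)))
     else 0)"

lemma Hg_point:
  "A i j * sc ((of_int i gchoose s) * (of_int j gchoose t)) * D s t (T B C (u - i + int s) (v - j + int t) (p, q, r, w))
   = Sum_any (\<lambda>S. Hg A B C u v ((i, j, s, t), (p, q, r, w), S))"
proof -
  let ?C = "C (u - i + int s - p + int r) (v - j + int t - q + int w)"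
  let ?c1 = "(of_int i gchoose s) * (of_int j gchoose t)"
  let ?c2 = "(of_int p gchoose r) * (of_int q gchoose w)"
  let ?f = "\<lambda>\<sigma> \<tau>. sc (of_nat (s choose \<sigma>) * of_nat (t choose \<tau>)) * (D \<sigma> \<tau> (B p q) * D (s + r - \<sigma>) (t + w - \<tau>) ?C)"
  have "Sum_any (\<lambda>S. Hg A B C u v ((i, j, s, t), (p, q, r, w), S)) = (\<Sum>S\<in>{..s} \<times> {..t}. Hg A B C u v ((i, j, s, t), (p, q, r, w), S))"
    by (rule SA_box) (auto simp: Hg_def split: if_splits)
  also have "\<dots> = (\<Sum>S\<in>{..s} \<times> {..t}. A i j * sc ?c1 * sc ?c2 * ?f (fst S) (snd S))"
    by (rule sum.cong) (auto simp: Hg_def sc_mult mult_ac)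
  also have "\<dots> = A i j * sc ?c1 * sc ?c2 * (\<Sum>\<sigma>\<le>s. \<Sum>\<tau>\<le>t. ?f \<sigma> \<tau>)"
    by (simp add: sum.cartesian_product split_def sum_distrib_left)
  also have "(\<Sum>\<sigma>\<le>s. \<Sum>\<tau>\<le>t. ?f \<sigma> \<tau>) = D s t (B p q * D r w ?C)"
    by (simp add: D_leibniz D_D)
  also have "A i j * sc ?c1 * sc ?c2 * D s t (B p q * D r w ?C) = A i j * sc ?c1 * D s t (T B C (u - i + int s) (v - j + int t) (p, q, r, w))"
  proof -
    have "T B C (u - i + int s) (v - j + int t) (p, q, r, w) = sc ?c2 * (B p q * D r w ?C)"
      by (simp add: T_alt mult_ac)
    then show ?thesis by (simp only: D_sc) (simp add: mult_ac)
  qed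
  finally show ?thesis by simp
qed

definition G :: "'a::field_char_0 psido \<Rightarrow> 'a psido \<Rightarrow> 'a psido \<Rightarrow> int \<Rightarrow> int \<Rightarrow>
   int \<times> int \<times> nat \<times> nat \<times> int \<times> int \<times> nat \<times> nat \<times> nat \<times> nat \<Rightarrow> 'a fps fps" where
  "G A B C u v = (\<lambda>(i, j, \<sigma>, \<tau>, p, q, l1, l2, r, w).
     A i j * D \<sigma> \<tau> (B p q) * D (l1 + r) (l2 + w) (C (u - i - p + int \<sigma> + int l1 + int r) (v - j - q + int \<tau> + int l2 + int w)) *
     sc ((of_int i gchoose (\<sigma> + l1)) * of_nat ((\<sigma> + l1) choose \<sigma>) * (of_int p gchoose r) *
         ((of_int j gchoose (\<tau> + l2)) * of_nat ((\<tau> + l2) choose \<tau>) * (of_int q gchoose w))))"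

definition psi :: "int \<times> int \<times> nat \<times> nat \<times> int \<times> int \<times> nat \<times> nat \<times> nat \<times> nat \<Rightarrow>
    (int \<times> int \<times> nat \<times> nat) \<times> (int \<times> int \<times> nat \<times> nat) \<times> (nat \<times> nat)" where
  "psi = (\<lambda>(i, j, \<sigma>, \<tau>, p, q, l1, l2, r, w). ((p + i - int \<sigma>, q + j - int \<tau>, l1 + r, l2 + w), (i, j, \<sigma>, \<tau>), (l1, l2)))"

definition phi :: "int \<times> int \<times> nat \<times> nat \<times> int \<times> int \<times> nat \<times> nat \<times> nat \<times> nat \<Rightarrow>
    (int \<times> int \<times> nat \<times> nat) \<times> (int \<times> int \<times> nat \<times> nat) \<times> (nat \<times> nat)" where
  "phi = (\<lambda>(i, j, \<sigma>, \<tau>, p, q, l1, l2, r, w). ((i, j, \<sigma> + l1, \<tau> + l2), (p, q, r, w), (\<sigma>, \<tau>)))"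

lemma inj_psi: "inj psi"
  unfolding inj_def psi_def by auto

lemma inj_phi: "inj phi"
  unfolding inj_def phi_def by auto

lemma Hf_psi: "Hf A B C u v \<circ> psi = G A B C u v"
  by (rule ext) (auto simp: Hf_def G_def psi_def algebra_simps)

lemma Hg_phi: "Hg A B C u v \<circ> phi = G A B C u v"
  by (rule ext) (auto simp: Hg_def G_def phi_def algebra_simps)

lemma Hf_range: "x \<notin> range psi \<Longrightarrow> Hf A B C u v x = 0"
proof -
  assume x: "x \<notin> range psi"
  obtain i' j' s' t' i j s t l1 l2 where xe: "x = ((i', j', s', t'), (i, j, s, t), (l1, l2))"
    by (metis prod.exhaust)
  have "\<not> (l1 \<le> s' \<and> l2 \<le> t')"
  proof
    assume h: "l1 \<le> s' \<and> l2 \<le> t'"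
    have "x = psi (i, j, s, t, i' - i + int s, j' - j + int t, l1, l2, s' - l1, t' - l2)"
      using h by (simp add: xe psi_def)
    then show False using x by blast
  qed
  then show ?thesis unfolding xe Hf_def by (simp only: prod.case if_False)
qed

lemma Hg_range: "x \<notin> range phi \<Longrightarrow> Hg A B C u v x = 0"
proof -
  assume x: "x \<notin> range phi"
  obtain i j s t p q r w \<sigma> \<tau> where xe: "x = ((i, j, s, t), (p, q, r, w), (\<sigma>, \<tau>))"
    by (metis prod.exhaust)
  have "\<not> (\<sigma> \<le> s \<and> \<tau> \<le> t)"
  proof
    assume h: "\<sigma> \<le> s \<and> \<tau> \<le> t"
    have "x = phi (i, j, \<sigma>, \<tau>, p, q, s - \<sigma>, t - \<tau>, r, w)"
      using h by (simp add: xe phi_def)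
    then show False using x by blast
  qed
  then show ?thesis unfolding xe Hg_def by (simp only: prod.case if_False)
qed

lemma le_natI: "int s \<le> R \<Longrightarrow> s \<le> nat R"
  by linarith

lemma Hf_fin:
  assumes "A \<in> PsiDO" "B \<in> PsiDO" "C \<in> PsiDO"
  shows "finite {x. Hf A B C u v x \<noteq> 0}"
proof -
  obtain R where R: "\<forall>i j p q n1 n2. 0 \<le> n1 \<longrightarrow> 0 \<le> n2 \<longrightarrow> A i j \<noteq> 0 \<longrightarrow> B p q \<noteq> 0 \<longrightarrow>
     C (u - i - p + n1) (v - j - q + n2) \<noteq> 0
     \<longrightarrow> \<bar>i\<bar> \<le> R \<and> \<bar>j\<bar> \<le> R \<and> \<bar>p\<bar> \<le> R \<and> \<bar>q\<bar> \<le> R \<and> n1 \<le> R \<and> n2 \<le> R"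
    using master3[OF assms] by blast
  let ?S = "({-3*R..3*R} \<times> {-3*R..3*R} \<times> {..nat R} \<times> {..nat R}) \<times> ({-R..R} \<times> {-R..R} \<times> {..nat R} \<times> {..nat R}) \<times> ({..nat R} \<times> {..nat R})"
  show ?thesis
  proof (rule fin_box[where S = ?S])
    fix x assume hx: "Hf A B C u v x \<noteq> 0"
    obtain i' j' s' t' i j s t l1 l2 where xe: "x = ((i', j', s', t'), (i, j, s, t), (l1, l2))"
      by (metis prod.exhaust)
    have h: "l1 \<le> s'" "l2 \<le> t'" "A i j \<noteq> 0" "B (i' - i + int s) (j' - j + int t) \<noteq> 0"
        "C (u - i' + int s') (v - j' + int t') \<noteq> 0"
      using hx by (auto simp: xe Hf_def split: if_splits dest: D_nz)
    have e: "u - i - (i' - i + int s) + (int s + int s') = u - i' + int s'"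
            "v - j - (j' - j + int t) + (int t + int t') = v - j' + int t'" by simp_all
    have b: "\<bar>i\<bar> \<le> R \<and> \<bar>j\<bar> \<le> R \<and> \<bar>i' - i + int s\<bar> \<le> R \<and> \<bar>j' - j + int t\<bar> \<le> R \<and> int s + int s' \<le> R \<and> int t + int t' \<le> R"
      using R[rule_format, of "int s + int s'" "int t + int t'" i j "i' - i + int s" "j' - j + int t", unfolded e] h by simp
    show "x \<in> ?S" unfolding xe using b h(1,2)
      by (auto intro!: le_natI)
  qed simp
qed

lemma Hg_fin:
  assumes "A \<in> PsiDO" "B \<in> PsiDO" "C \<in> PsiDO"
  shows "finite {x. Hg A B C u v x \<noteq> 0}"
proof -
  obtain R where R: "\<forall>i j p q n1 n2. 0 \<le> n1 \<longrightarrow> 0 \<le> n2 \<longrightarrow> A i j \<noteq> 0 \<longrightarrow> B p q \<noteq> 0 \<longrightarrow>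
     C (u - i - p + n1) (v - j - q + n2) \<noteq> 0
     \<longrightarrow> \<bar>i\<bar> \<le> R \<and> \<bar>j\<bar> \<le> R \<and> \<bar>p\<bar> \<le> R \<and> \<bar>q\<bar> \<le> R \<and> n1 \<le> R \<and> n2 \<le> R"
    using master3[OF assms] by blast
  let ?S = "({-R..R} \<times> {-R..R} \<times> {..nat R} \<times> {..nat R}) \<times> ({-R..R} \<times> {-R..R} \<times> {..nat R} \<times> {..nat R}) \<times> ({..nat R} \<times> {..nat R})"
  show ?thesis
  proof (rule fin_box[where S = ?S])
    fix x assume hx: "Hg A B C u v x \<noteq> 0"
    obtain i j s t p q r w \<sigma> \<tau> where xe: "x = ((i, j, s, t), (p, q, r, w), (\<sigma>, \<tau>))"
      by (metis prod.exhaust)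
    have h: "\<sigma> \<le> s" "\<tau> \<le> t" "A i j \<noteq> 0" "B p q \<noteq> 0"
        "C (u - i + int s - p + int r) (v - j + int t - q + int w) \<noteq> 0"
      using hx by (auto simp: xe Hg_def split: if_splits dest: D_nz)
    have e: "u - i - p + (int s + int r) = u - i + int s - p + int r"
            "v - j - q + (int t + int w) = v - j + int t - q + int w" by simp_all
    have b: "\<bar>i\<bar> \<le> R \<and> \<bar>j\<bar> \<le> R \<and> \<bar>p\<bar> \<le> R \<and> \<bar>q\<bar> \<le> R \<and> int s + int r \<le> R \<and> int t + int w \<le> R"
      using R[rule_format, of "int s + int r" "int t + int w" i j p q, unfolded e] h by simp
    show "x \<in> ?S" unfolding xe using b h(1,2)
      by (auto intro!: le_natI)
  qed simp
qed

lemma slice_fin: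
  assumes "finite {x. F x \<noteq> (0::'c::zero)}"
  shows "finite {y. F (a, y) \<noteq> 0}"
proof -
  have "{y. F (a, y) \<noteq> 0} \<subseteq> snd ` {x. F x \<noteq> 0}" by (auto simp: image_iff)
  then show ?thesis using assms by (meson finite_imageI finite_subset)
qed

lemma assoc_LHS:
  assumes A: "A \<in> PsiDO" and B: "B \<in> PsiDO" and C: "C \<in> PsiDO"
  shows "emul (emul A B) C u v = Sum_any (G A B C u v)"
proof -
  have AB: "emul A B \<in> PsiDO" using emul_closed[OF A B] .
  have fin: "finite {x. Hf A B C u v x \<noteq> 0}" using Hf_fin[OF A B C] .
  have 1: "T (emul A B) C u v P = Sum_any (\<lambda>IL. Hf A B C u v (P, IL))" for P
  proof -
    obtain i' j' s' t' where Pe: "P = (i', j', s', t')" by (metis prod.exhaust)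
    let ?W = "sc ((of_int i' gchoose s') * (of_int j' gchoose t')) * D s' t' (C (u - i' + int s') (v - j' + int t'))"
    have "T (emul A B) C u v P = Sum_any (T A B i' j') * ?W"
      by (simp add: Pe T_alt emul_SA[OF A B] mult.assoc)
    also have "\<dots> = Sum_any (\<lambda>I. T A B i' j' I * ?W)"
      by (rule Sum_any_left_distrib[OF T_supp_fin[OF A B]])
    also have "\<dots> = Sum_any (\<lambda>I. Sum_any (\<lambda>L. Hf A B C u v (P, I, L)))"
    proof (rule Sum_any.cong)
      fix I :: "int \<times> int \<times> nat \<times> nat"
      obtain i j s t where Ie: "I = (i, j, s, t)" by (metis prod.exhaust)
      show "T A B i' j' I * ?W = Sum_any (\<lambda>L. Hf A B C u v (P, I, L))"
        unfolding Ie Pe by (rule Hf_point)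
    qed
    also have "\<dots> = Sum_any (\<lambda>(I, L). Hf A B C u v (P, I, L))"
      by (rule SA_pair) (use slice_fin[OF fin, of P] in simp)
    finally show ?thesis by (simp add: case_prod_beta')
  qed
  have "emul (emul A B) C u v = Sum_any (\<lambda>P. Sum_any (\<lambda>IL. Hf A B C u v (P, IL)))"
    unfolding emul_SA[OF AB C] 1 by (rule refl)
  also have "\<dots> = Sum_any (\<lambda>(P, IL). Hf A B C u v (P, IL))"
    by (rule SA_pair) (use fin in simp)
  also have "\<dots> = Sum_any (Hf A B C u v)" by (simp add: case_prod_beta')
  also have "\<dots> = Sum_any (Hf A B C u v \<circ> psi)"
    by (rule SA_reindex_inj[OF inj_psi Hf_range])
  finally show ?thesis by (simp add: Hf_psi)
qed

lemma assoc_RHS: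
  assumes A: "A \<in> PsiDO" and B: "B \<in> PsiDO" and C: "C \<in> PsiDO"
  shows "emul A (emul B C) u v = Sum_any (G A B C u v)"
proof -
  have BC: "emul B C \<in> PsiDO" using emul_closed[OF B C] .
  have fin: "finite {x. Hg A B C u v x \<noteq> 0}" using Hg_fin[OF A B C] .
  have 1: "T A (emul B C) u v I = Sum_any (\<lambda>QS. Hg A B C u v (I, QS))" for I
  proof -
    obtain i j s t where Ie: "I = (i, j, s, t)" by (metis prod.exhaust)
    let ?x = "u - i + int s" and ?y = "v - j + int t"
    let ?c = "A i j * sc ((of_int i gchoose s) * (of_int j gchoose t))"
    have f1: "finite {Q. D s t (T B C ?x ?y Q) \<noteq> 0}"
      using T_supp_fin[OF B C, of ?x ?y] by (rule rev_finite_subset) (auto dest: D_nz)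
    have "T A (emul B C) u v I = ?c * D s t (Sum_any (T B C ?x ?y))"
      by (simp add: Ie T_alt emul_SA[OF B C])
    also have "\<dots> = ?c * Sum_any (\<lambda>Q. D s t (T B C ?x ?y Q))"
      by (simp add: D_SA[OF T_supp_fin[OF B C]])
    also have "\<dots> = Sum_any (\<lambda>Q. ?c * D s t (T B C ?x ?y Q))"
      by (rule Sum_any_right_distrib[OF f1])
    also have "\<dots> = Sum_any (\<lambda>Q. Sum_any (\<lambda>S. Hg A B C u v (I, Q, S)))"
    proof (rule Sum_any.cong)
      fix Q :: "int \<times> int \<times> nat \<times> nat"
      obtain p q r w where Qe: "Q = (p, q, r, w)" by (metis prod.exhaust)
      show "?c * D s t (T B C ?x ?y Q) = Sum_any (\<lambda>S. Hg A B C u v (I, Q, S))"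
        unfolding Ie Qe by (rule Hg_point)
    qed
    also have "\<dots> = Sum_any (\<lambda>(Q, S). Hg A B C u v (I, Q, S))"
      by (rule SA_pair) (use slice_fin[OF fin, of I] in simp)
    finally show ?thesis by (simp add: case_prod_beta')
  qed
  have "emul A (emul B C) u v = Sum_any (\<lambda>I. Sum_any (\<lambda>QS. Hg A B C u v (I, QS)))"
    unfolding emul_SA[OF A BC] 1 by (rule refl)
  also have "\<dots> = Sum_any (\<lambda>(I, QS). Hg A B C u v (I, QS))"
    by (rule SA_pair) (use fin in simp)
  also have "\<dots> = Sum_any (Hg A B C u v)" by (simp add: case_prod_beta')
  also have "\<dots> = Sum_any (Hg A B C u v \<circ> phi)"
    by (rule SA_reindex_inj[OF inj_phi Hg_range])
  finally show ?thesis by (simp add: Hg_phi)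
qed

lemma emul_assoc:
  assumes "A \<in> PsiDO" "B \<in> PsiDO" "C \<in> PsiDO"
  shows "emul (emul A B) C = emul A (emul B C)"
  by (rule ext)+ (simp add: assoc_LHS[OF assms] assoc_RHS[OF assms])

definition eneg :: "'a::comm_ring_1 psido \<Rightarrow> 'a psido" where
  "eneg A = (\<lambda>i j. - A i j)"

lemma psido_add:
  assumes "A \<in> PsiDO" "B \<in> PsiDO"
  shows "eadd A B \<in> PsiDO"
proof -
  obtain NA where NA: "\<forall>i j. j > NA \<longrightarrow> A i j = 0" using psido_N[OF assms(1)] by blast
  obtain NB where NB: "\<forall>i j. j > NB \<longrightarrow> B i j = 0" using psido_N[OF assms(2)] by blast
  have 1: "\<forall>i j. j > max NA NB \<longrightarrow> eadd A B i j = 0" using NA NB by (simp add: eadd_def)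
  have 2: "\<exists>M. \<forall>i. i > M \<longrightarrow> eadd A B i j = 0" for j
  proof -
    obtain MA where MA: "\<forall>i. i > MA \<longrightarrow> A i j = 0" using assms(1) unfolding PsiDO_def by blast
    obtain MB where MB: "\<forall>i. i > MB \<longrightarrow> B i j = 0" using assms(2) unfolding PsiDO_def by blast
    show ?thesis using MA MB by (intro exI[of _ "max MA MB"]) (simp add: eadd_def)
  qed
  show ?thesis unfolding PsiDO_def using 1 2 by blast
qed

lemma psido_neg: "A \<in> PsiDO \<Longrightarrow> eneg A \<in> PsiDO"
  by (simp add: PsiDO_def eneg_def)

lemma psido_zero: "ezero \<in> PsiDO"
  by (simp add: PsiDO_def ezero_def)

lemma psido_one: "eone \<in> PsiDO"
proof -
  have "\<forall>i j. j > 0 \<longrightarrow> eone i j = 0" "\<forall>j. \<forall>i. i > 0 \<longrightarrow> eone i j = 0" by (auto simp: eone_def)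
  then show ?thesis unfolding PsiDO_def by blast
qed

lemma epoly_add: "A \<in> Epoly \<Longrightarrow> B \<in> Epoly \<Longrightarrow> eadd A B \<in> Epoly"
  by (simp add: Epoly_def psido_add) (simp add: eadd_def)

lemma epoly_neg: "A \<in> Epoly \<Longrightarrow> eneg A \<in> Epoly"
  by (simp add: Epoly_def psido_neg) (simp add: eneg_def)

lemma epoly_zero: "ezero \<in> Epoly"
  by (simp add: Epoly_def psido_zero) (simp add: ezero_def)

lemma epoly_one: "eone \<in> Epoly"
  by (simp add: Epoly_def psido_one) (simp add: eone_def)

lemma T_zero_neg:
  assumes "0 \<le> i" "0 \<le> u - i + int s" "u < 0"
  shows "T A B u v (i, j, s, t) = 0"
proof -
  have "(of_int i gchoose s :: 'a) = 0" using assms by (intro gchoose_int_zero) auto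
  then show ?thesis by (simp add: T_alt)
qed

lemma epoly_mult:
  assumes "A \<in> Epoly" "B \<in> Epoly"
  shows "emul A B \<in> Epoly"
proof -
  have "emul A B u v = 0" if "u < 0" for u v
  proof -
    have "T A B u v x = 0" for x
    proof (cases x)
      case (fields i j s t)
      show ?thesis
      proof (cases "A i j = 0 \<or> B (u - i + int s) (v - j + int t) = 0")
        case True then show ?thesis by (auto simp: fields T_alt)
      next
        case False
        then have "0 \<le> i" "0 \<le> u - i + int s" using assms by (auto simp: Epoly_def not_less[symmetric])
        then show ?thesis using T_zero_neg that fields by blast
      qed
    qed
    then show ?thesis by (simp add: emul_T)
  qed
  then show ?thesis using assms by (simp add: Epoly_def emul_closed)
qed

lemma emul_one_left:
  assumes "B \<in> PsiDO"
  shows "emul eone B = B"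
proof (intro ext)
  fix u v
  have "T eone B u v x = (if x = (0, 0, 0, 0) then B u v else 0)" for x
    by (cases x) (auto simp: T_alt eone_def gbinomial_0_left)
  then show "emul eone B u v = B u v"
    by (simp add: emul_SA[OF psido_one assms])
qed

lemma emul_one_right:
  assumes "A \<in> PsiDO"
  shows "emul A eone = A"
proof (intro ext)
  fix u v
  have "T A eone u v x = (if x = (u, v, 0, 0) then A u v else 0)" for x
    by (cases x) (auto simp: T_alt eone_def D_1)
  then show "emul A eone u v = A u v"
    by (simp add: emul_SA[OF assms psido_one])
qed

lemma emul_ldistr:
  assumes "A \<in> PsiDO" "B \<in> PsiDO" "C \<in> PsiDO"
  shows "emul (eadd A B) C = eadd (emul A C) (emul B C)"
proof (intro ext)
  fix u v
  have "T (eadd A B) C u v x = T A C u v x + T B C u v x" for x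
    by (cases x) (simp add: T_alt eadd_def algebra_simps)
  then have "Sum_any (T (eadd A B) C u v) = Sum_any (\<lambda>x. T A C u v x + T B C u v x)" by simp
  also have "\<dots> = Sum_any (T A C u v) + Sum_any (T B C u v)"
    by (rule Sum_any.distrib[OF T_supp_fin T_supp_fin]) (use assms in auto)
  finally have X: "Sum_any (T (eadd A B) C u v) = Sum_any (T A C u v) + Sum_any (T B C u v)" .
  have Y: "eadd (emul A C) (emul B C) u v = emul A C u v + emul B C u v" by (simp add: eadd_def)
  show "emul (eadd A B) C u v = eadd (emul A C) (emul B C) u v"
    using X Y by (simp only: emul_SA[OF psido_add[OF assms(1,2)] assms(3)] emul_SA[OF assms(1,3)] emul_SA[OF assms(2,3)])
qed

lemma emul_rdistr:
  assumes "A \<in> PsiDO" "B \<in> PsiDO" "C \<in> PsiDO"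
  shows "emul C (eadd A B) = eadd (emul C A) (emul C B)"
proof (intro ext)
  fix u v
  have "T C (eadd A B) u v x = T C A u v x + T C B u v x" for x
    by (cases x) (simp add: T_alt eadd_def D_add algebra_simps)
  then have "Sum_any (T C (eadd A B) u v) = Sum_any (\<lambda>x. T C A u v x + T C B u v x)" by simp
  also have "\<dots> = Sum_any (T C A u v) + Sum_any (T C B u v)"
    by (rule Sum_any.distrib[OF T_supp_fin T_supp_fin]) (use assms in auto)
  finally have X: "Sum_any (T C (eadd A B) u v) = Sum_any (T C A u v) + Sum_any (T C B u v)" .
  have Y: "eadd (emul C A) (emul C B) u v = emul C A u v + emul C B u v" by (simp add: eadd_def)
  show "emul C (eadd A B) u v = eadd (emul C A) (emul C B) u v"
    using X Y by (simp only: emul_SA[OF assms(3) psido_add[OF assms(1,2)]] emul_SA[OF assms(3,1)] emul_SA[OF assms(3,2)])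
qed

lemma pval0_0[simp]: "pval0 0 = 0" by (simp add: pval0_def)
lemma pval0_add: "pval0 (f + g) = pval0 f + pval0 g" by (simp add: pval0_def)
lemma pval0_sum: "pval0 (sum f S) = (\<Sum>x\<in>S. pval0 (f x))"
  by (induction S rule: infinite_finite_induct) (auto simp: pval0_add)
lemma pval0_sc: "pval0 (sc c * f) = c * pval0 f" by (simp add: pval0_def sc_def)

lemma lift_alt: "lift v = (\<lambda>i j. sc (v (- i) (- j)))"
  by (simp add: lift_def sc_def)

lemma lift_psido:
  assumes "v \<in> Vsp"
  shows "lift v \<in> PsiDO"
proof -
  obtain M where M: "\<forall>n m. m < M \<longrightarrow> v n m = 0" using assms unfolding Vsp_def by blast
  have 1: "\<forall>i j. j > - M \<longrightarrow> lift v i j = 0" using M by (simp add: lift_alt)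
  have 2: "\<exists>K. \<forall>i. i > K \<longrightarrow> lift v i j = 0" for j
  proof -
    obtain N where N: "\<forall>n. n < N \<longrightarrow> v n (- j) = 0" using assms unfolding Vsp_def by blast
    show ?thesis using N by (intro exI[of _ "- N"]) (simp add: lift_alt)
  qed
  show ?thesis unfolding PsiDO_def using 1 2 by blast
qed

lemma proj_vsp:
  assumes "X \<in> PsiDO"
  shows "proj X \<in> Vsp"
proof -
  obtain N where N: "\<forall>i j. j > N \<longrightarrow> X i j = 0" using psido_N[OF assms] by blast
  have 1: "\<forall>n m. m < - N \<longrightarrow> proj X n m = 0" using N by (simp add: proj_def)
  have 2: "\<exists>K. \<forall>n. n < K \<longrightarrow> proj X n m = 0" for m
  proof -
    obtain M where M: "\<forall>i. i > M \<longrightarrow> X i (- m) = 0" using assms unfolding PsiDO_def by blast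
    show ?thesis using M by (intro exI[of _ "- M"]) (simp add: proj_def)
  qed
  show ?thesis unfolding Vsp_def using 1 2 by blast
qed

lemma ract_vsp: "v \<in> Vsp \<Longrightarrow> A \<in> PsiDO \<Longrightarrow> ract v A \<in> Vsp"
  unfolding ract_def by (intro proj_vsp emul_closed lift_psido)

lemma epoly_sub_eplus:
  assumes "A \<in> Epoly"
  shows "A \<in> Eplus"
proof -
  have AP: "A \<in> PsiDO" using assms by (simp add: Epoly_def)
  have "ract v A \<in> Wl" if v: "v \<in> Wl" for v
  proof -
    have vV: "v \<in> Vsp" using v by (simp add: Wl_def)
    have "ract v A n m = 0" if n: "n > 0" for n m
    proof -
      have "T (lift v) A (- n) (- m) x = 0" for x
      proof (cases x)
        case (fields i j s t)
        show ?thesis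
        proof (cases "lift v i j = 0 \<or> A (- n - i + int s) (- m - j + int t) = 0")
          case True then show ?thesis by (auto simp: fields T_alt)
        next
          case False
          then have "v (- i) (- j) \<noteq> 0" "A (- n - i + int s) (- m - j + int t) \<noteq> 0"
            by (auto simp: lift_alt)
          then have "0 \<le> i" "0 \<le> - n - i + int s" using v assms
            by (auto simp: Wl_def Epoly_def not_less[symmetric])
          then show ?thesis using T_zero_neg n fields by (metis neg_less_0_iff_less)
        qed
      qed
      then show ?thesis by (simp add: ract_def proj_def emul_T)
    qed
    then show ?thesis using ract_vsp[OF vV AP] by (simp add: Wl_def)
  qed
  then show ?thesis using AP by (simp add: Eplus_def)
qed

definition mon :: "nat \<Rightarrow> nat \<Rightarrow> int \<Rightarrow> int \<Rightarrow> 'a::field_char_0" where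
  "mon a b = (\<lambda>n m. if n = - int a \<and> m = - int b then 1 else 0)"

lemma mon_Wl: "mon a b \<in> Wl"
proof -
  have 1: "\<forall>n m. m < - int b \<longrightarrow> mon a b n m = 0" by (simp add: mon_def)
  have 2: "\<exists>N. \<forall>n. n < N \<longrightarrow> mon a b n m = 0" for m
    by (intro exI[of _ "- int a"]) (simp add: mon_def)
  have 3: "\<forall>n m. n > 0 \<longrightarrow> mon a b n m = 0" by (simp add: mon_def)
  show ?thesis unfolding Wl_def Vsp_def using 1 2 3 by blast
qed

lemma lift_mon: "lift (mon a b) = (\<lambda>i j. if i = int a \<and> j = int b then 1 else 0)"
  by (intro ext) (auto simp: lift_alt mon_def)

lemma sum_collapse:
  fixes a b :: nat
  assumes "\<And>s t. s \<le> a \<Longrightarrow> t \<le> b \<Longrightarrow> \<not> (s = a \<and> t = b) \<Longrightarrow> h s t = (0::'c::comm_monoid_add)"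
  shows "(\<Sum>s\<le>a. \<Sum>t\<le>b. h s t) = h a b"
proof -
  have "(\<Sum>t\<le>b. h s t) = (if s = a then h a b else 0)" if "s \<le> a" for s
  proof (cases "s = a")
    case True
    have "(\<Sum>t\<le>b. h s t) = (\<Sum>t\<le>b. if t = b then h a b else 0)"
    proof (intro sum.cong refl)
      fix t assume "t \<in> {..b}"
      then show "h s t = (if t = b then h a b else 0)" using assms[of a t] True by auto
    qed
    then show ?thesis using True by simp
  next
    case False
    then show ?thesis using assms that by simp
  qed
  then have "(\<Sum>s\<le>a. \<Sum>t\<le>b. h s t) = (\<Sum>s\<le>a. if s = a then h a b else 0)"
    by (intro sum.cong refl) auto
  also have "\<dots> = h a b" by simp
  finally show ?thesis .
qed

lemma emul_mon:
  assumes AP: "A \<in> PsiDO"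
  shows "emul (lift (mon a b)) A x y = (\<Sum>s\<le>a. \<Sum>t\<le>b. sc ((of_int (int a) gchoose s) * (of_int (int b) gchoose t)) *
            D s t (A (x - int a + int s) (y - int b + int t)))"
proof -
  let ?F = "\<lambda>(s, t). sc ((of_int (int a) gchoose s) * (of_int (int b) gchoose t)) * D s t (A (x - int a + int s) (y - int b + int t))"
  define \<rho> where "\<rho> = (\<lambda>(s::nat, t::nat). (int a, int b, s, t))"
  have inj: "inj \<rho>" unfolding \<rho>_def inj_def by auto
  have LP: "lift (mon a b) \<in> PsiDO" using lift_psido mon_Wl[of a b] unfolding Wl_def by blast
  have "emul (lift (mon a b)) A x y = Sum_any (T (lift (mon a b)) A x y)"
    by (rule emul_SA[OF LP AP])
  also have "\<dots> = Sum_any (T (lift (mon a b)) A x y \<circ> \<rho>)"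
  proof (rule SA_reindex_inj[OF inj])
    fix z assume "z \<notin> range \<rho>"
    then show "T (lift (mon a b)) A x y z = 0"
      by (cases z) (auto simp: T_alt lift_mon \<rho>_def)
  qed
  also have "\<dots> = Sum_any ?F"
    by (intro Sum_any.cong) (auto simp: T_alt lift_mon \<rho>_def)
  also have "\<dots> = sum ?F ({..a} \<times> {..b})"
  proof (rule SA_box)
    fix z assume "z \<notin> {..a} \<times> {..b}"
    then obtain s t where z: "z = (s, t)" "a < s \<or> b < t" by (cases z) auto
    have "(of_int (int a) gchoose s :: 'a) = 0 \<or> (of_int (int b) gchoose t :: 'a) = 0"
      using z(2) gchoose_int_zero[of "int a" s] gchoose_int_zero[of "int b" t] by auto
    then show "?F z = 0" by (auto simp: z)
  qed simp
  finally show ?thesis by (simp add: sum.cartesian_product)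
qed

lemma eplus_sub_epoly:
  assumes "A \<in> Eplus"
  shows "A \<in> Epoly"
proof -
  have AP: "A \<in> PsiDO" and hW: "\<And>v. v \<in> Wl \<Longrightarrow> ract v A \<in> Wl" using assms by (auto simp: Eplus_def)
  have key: "(\<Sum>s\<le>a. \<Sum>t\<le>b. (of_int (int a) gchoose s) * (of_int (int b) gchoose t) *
       (of_nat (fact s) * of_nat (fact t) * (A (x - int a + int s) (y - int b + int t) $ t) $ s)) = 0"
    if x: "x < 0" for a b x y
  proof -
    have "ract (mon a b) A (- x) (- y) = 0" using hW[OF mon_Wl[of a b]] x by (simp add: Wl_def)
    moreover have "ract (mon a b) A (- x) (- y) = pval0 (emul (lift (mon a b)) A x y)"
      by (simp add: ract_def proj_def)
    moreover have "pval0 (emul (lift (mon a b)) A x y) = (\<Sum>s\<le>a. \<Sum>t\<le>b. (of_int (int a) gchoose s) * (of_int (int b) gchoose t) *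
       (of_nat (fact s) * of_nat (fact t) * (A (x - int a + int s) (y - int b + int t) $ t) $ s))"
      by (simp add: emul_mon[OF AP] pval0_sum pval0_sc pval0_D)
    ultimately show ?thesis by simp
  qed
  have main: "\<forall>a b. a + b = k \<longrightarrow> (\<forall>x y. x < 0 \<longrightarrow> (A x y $ b) $ a = 0)" for k
  proof (induction k rule: less_induct)
    case (less k)
    show ?case
    proof (intro allI impI)
      fix a b x y assume ab: "a + b = k" and x: "x < (0::int)"
      let ?h = "\<lambda>s t. (of_int (int a) gchoose s) * (of_int (int b) gchoose t) *
         (of_nat (fact s) * of_nat (fact t) * (A (x - int a + int s) (y - int b + int t) $ t) $ s :: 'a)"
      have "(\<Sum>s\<le>a. \<Sum>t\<le>b. ?h s t) = ?h a b"
      proof (rule sum_collapse)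
        fix s t assume st: "s \<le> a" "t \<le> b" "\<not> (s = a \<and> t = b)"
        then have "s + t < k" using ab by auto
        moreover have "x - int a + int s < 0" using st x by linarith
        ultimately have "(A (x - int a + int s) (y - int b + int t) $ t) $ s = 0" using less by blast
        then show "?h s t = 0" by simp
      qed
      then have "?h a b = 0" using key[OF x, of a b y] by simp
      moreover have "(of_int (int a) gchoose a :: 'a) = 1" "(of_int (int b) gchoose b :: 'a) = 1"
        by (simp_all add: binomial_gbinomial[symmetric])
      ultimately show "(A x y $ b) $ a = 0" by simp
    qed
  qed
  have "A x y = 0" if "x < 0" for x y
  proof (rule fps_ext)
    fix b show "A x y $ b = 0 $ b"
      by (rule fps_ext) (use main[of "_ + b"] that in auto)
  qed
  then show ?thesis using AP by (simp add: Epoly_def)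
qed

lemma Eplus_eq: "Eplus = Epoly"
  using eplus_sub_epoly epoly_sub_eplus by blast

lemma epoly_psido: "A \<in> Epoly \<Longrightarrow> A \<in> PsiDO" by (simp add: Epoly_def)

lemma ring_Eplus: "ring (Eplus_ring :: 'a::field_char_0 psido ring)"
proof (rule ringI)
  show "abelian_group (Eplus_ring :: 'a psido ring)"
  proof (rule abelian_groupI)
    fix x y z :: "'a psido"
    show "x \<in> carrier Eplus_ring \<Longrightarrow> y \<in> carrier Eplus_ring \<Longrightarrow> x \<oplus>\<^bsub>Eplus_ring\<^esub> y \<in> carrier Eplus_ring"
      by (simp add: Eplus_ring_def Eplus_eq epoly_add)
    show "\<zero>\<^bsub>Eplus_ring\<^esub> \<in> carrier (Eplus_ring :: 'a psido ring)"
      by (simp add: Eplus_ring_def Eplus_eq epoly_zero)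
    show "x \<oplus>\<^bsub>Eplus_ring\<^esub> y \<oplus>\<^bsub>Eplus_ring\<^esub> z = x \<oplus>\<^bsub>Eplus_ring\<^esub> (y \<oplus>\<^bsub>Eplus_ring\<^esub> z)"
      by (simp add: Eplus_ring_def eadd_def add.assoc)
    show "x \<oplus>\<^bsub>Eplus_ring\<^esub> y = y \<oplus>\<^bsub>Eplus_ring\<^esub> x"
      by (simp add: Eplus_ring_def eadd_def add.commute)
    show "\<zero>\<^bsub>Eplus_ring\<^esub> \<oplus>\<^bsub>Eplus_ring\<^esub> x = x"
      by (simp add: Eplus_ring_def eadd_def ezero_def)
    show "x \<in> carrier Eplus_ring \<Longrightarrow> \<exists>y\<in>carrier Eplus_ring. y \<oplus>\<^bsub>Eplus_ring\<^esub> x = \<zero>\<^bsub>Eplus_ring\<^esub>"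
      by (rule bexI[of _ "eneg x"]) (simp add: Eplus_ring_def eadd_def eneg_def ezero_def, simp add: Eplus_ring_def Eplus_eq epoly_neg)
  qed
  show "monoid (Eplus_ring :: 'a psido ring)"
  proof (rule monoidI)
    fix x y z :: "'a psido"
    show "x \<in> carrier Eplus_ring \<Longrightarrow> y \<in> carrier Eplus_ring \<Longrightarrow> x \<otimes>\<^bsub>Eplus_ring\<^esub> y \<in> carrier Eplus_ring"
      by (simp add: Eplus_ring_def Eplus_eq epoly_mult)
    show "\<one>\<^bsub>Eplus_ring\<^esub> \<in> carrier (Eplus_ring :: 'a psido ring)"
      by (simp add: Eplus_ring_def Eplus_eq epoly_one)
    show "x \<in> carrier Eplus_ring \<Longrightarrow> y \<in> carrier Eplus_ring \<Longrightarrow> z \<in> carrier Eplus_ring \<Longrightarrow>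
        x \<otimes>\<^bsub>Eplus_ring\<^esub> y \<otimes>\<^bsub>Eplus_ring\<^esub> z = x \<otimes>\<^bsub>Eplus_ring\<^esub> (y \<otimes>\<^bsub>Eplus_ring\<^esub> z)"
      by (simp add: Eplus_ring_def Eplus_eq emul_assoc epoly_psido)
    show "x \<in> carrier Eplus_ring \<Longrightarrow> \<one>\<^bsub>Eplus_ring\<^esub> \<otimes>\<^bsub>Eplus_ring\<^esub> x = x"
      by (simp add: Eplus_ring_def Eplus_eq emul_one_left epoly_psido)
    show "x \<in> carrier Eplus_ring \<Longrightarrow> x \<otimes>\<^bsub>Eplus_ring\<^esub> \<one>\<^bsub>Eplus_ring\<^esub> = x"
      by (simp add: Eplus_ring_def Eplus_eq emul_one_right epoly_psido)
  qed
  fix x y z :: "'a psido"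
  show "x \<in> carrier Eplus_ring \<Longrightarrow> y \<in> carrier Eplus_ring \<Longrightarrow> z \<in> carrier Eplus_ring \<Longrightarrow>
      (x \<oplus>\<^bsub>Eplus_ring\<^esub> y) \<otimes>\<^bsub>Eplus_ring\<^esub> z = x \<otimes>\<^bsub>Eplus_ring\<^esub> z \<oplus>\<^bsub>Eplus_ring\<^esub> y \<otimes>\<^bsub>Eplus_ring\<^esub> z"
    by (simp add: Eplus_ring_def Eplus_eq emul_ldistr epoly_psido)
  show "x \<in> carrier Eplus_ring \<Longrightarrow> y \<in> carrier Eplus_ring \<Longrightarrow> z \<in> carrier Eplus_ring \<Longrightarrow>
      z \<otimes>\<^bsub>Eplus_ring\<^esub> (x \<oplus>\<^bsub>Eplus_ring\<^esub> y) = z \<otimes>\<^bsub>Eplus_ring\<^esub> x \<oplus>\<^bsub>Eplus_ring\<^esub> z \<otimes>\<^bsub>Eplus_ring\<^esub> y"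
    by (simp add: Eplus_ring_def Eplus_eq emul_rdistr epoly_psido)
qed

lemma inv_E:
  assumes "(x :: 'a::field_char_0 psido) \<in> PsiDO"
  shows "inv\<^bsub>E_addgroup\<^esub> x = eneg x"
  unfolding m_inv_def
proof (rule the_equality)
  show "eneg x \<in> carrier E_addgroup \<and> x \<otimes>\<^bsub>E_addgroup\<^esub> eneg x = \<one>\<^bsub>E_addgroup\<^esub> \<and> eneg x \<otimes>\<^bsub>E_addgroup\<^esub> x = \<one>\<^bsub>E_addgroup\<^esub>"
  proof -
    have e1: "eadd x (eneg x) = ezero" "eadd (eneg x) x = ezero" by (simp_all add: eadd_def eneg_def ezero_def)
    show ?thesis using psido_neg[OF assms] e1 by (simp add: E_addgroup_def)
  qed
  fix y assume "y \<in> carrier E_addgroup \<and> x \<otimes>\<^bsub>E_addgroup\<^esub> y = \<one>\<^bsub>E_addgroup\<^esub> \<and> y \<otimes>\<^bsub>E_addgroup\<^esub> x = \<one>\<^bsub>E_addgroup\<^esub>"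
  then have "eadd x y = ezero" by (simp add: E_addgroup_def)
  then have "\<forall>i j. x i j + y i j = 0" by (metis eadd_def ezero_def)
  then show "y = eneg x" by (intro ext) (simp add: eneg_def eq_neg_iff_add_eq_0 add.commute)
qed

lemma eminus_psido: "A \<in> Eminus \<Longrightarrow> A \<in> PsiDO" by (simp add: Eminus_def)

lemma subgroup_Eplus: "subgroup (Eplus :: 'a::field_char_0 psido set) E_addgroup"
  unfolding subgroup_def
  by (auto simp: Eplus_eq E_addgroup_def epoly_psido epoly_add epoly_zero inv_E[unfolded E_addgroup_def] epoly_neg)

lemma subgroup_Eminus: "subgroup (Eminus :: 'a::field_char_0 psido set) E_addgroup"
proof -
  have add: "eadd A B \<in> Eminus" if "A \<in> Eminus" "B \<in> Eminus" for A B :: "'a psido"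
    using that by (simp add: Eminus_def psido_add) (simp add: eadd_def)
  have zero: "ezero \<in> (Eminus :: 'a psido set)" by (simp add: Eminus_def psido_zero) (simp add: ezero_def)
  have neg: "eneg A \<in> Eminus" if "A \<in> Eminus" for A :: "'a psido"
    using that by (simp add: Eminus_def psido_neg) (simp add: eneg_def)
  show ?thesis unfolding subgroup_def
    using add zero neg by (auto simp: E_addgroup_def eminus_psido inv_E[unfolded E_addgroup_def])
qed

lemma psido_restrict:
  assumes "A \<in> PsiDO"
  shows "(\<lambda>i j. if c i then A i j else 0) \<in> PsiDO"
proof -
  obtain N where N: "\<forall>i j. j > N \<longrightarrow> A i j = 0" using psido_N[OF assms] by blast
  have 1: "\<forall>i j. j > N \<longrightarrow> (if c i then A i j else 0) = 0" using N by simp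
  have 2: "\<exists>M. \<forall>i. i > M \<longrightarrow> (if c i then A i j else 0) = 0" for j
  proof -
    obtain M where M: "\<forall>i. i > M \<longrightarrow> A i j = 0" using assms unfolding PsiDO_def by blast
    show ?thesis using M by (intro exI[of _ M]) simp
  qed
  show ?thesis unfolding PsiDO_def using 1 2 by blast
qed

lemma decomp:
  assumes "(A :: 'a::field_char_0 psido) \<in> PsiDO"
  shows "\<exists>!PM. fst PM \<in> Eplus \<and> snd PM \<in> Eminus \<and> A = eadd (fst PM) (snd PM)"
proof (rule ex1I)
  let ?P = "\<lambda>i j. if 0 \<le> i then A i j else 0"
  let ?M = "\<lambda>i j. if 0 \<le> i then 0 else A i j"
  have "?P \<in> PsiDO" using psido_restrict[OF assms] .
  moreover have "?M \<in> PsiDO"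
  proof -
    have "?M = (\<lambda>i j. if \<not> 0 \<le> i then A i j else 0)" by (intro ext) auto
    then show ?thesis using psido_restrict[OF assms, of "\<lambda>i. \<not> 0 \<le> i"] by simp
  qed
  ultimately show "fst (?P, ?M) \<in> Eplus \<and> snd (?P, ?M) \<in> Eminus \<and> A = eadd (fst (?P, ?M)) (snd (?P, ?M))"
    by (auto simp: Eplus_eq Epoly_def Eminus_def eadd_def intro!: ext)
  fix PM assume h: "fst PM \<in> Eplus \<and> snd PM \<in> Eminus \<and> A = eadd (fst PM) (snd PM)"
  have 1: "fst PM = ?P"
  proof (intro ext)
    fix i j show "fst PM i j = ?P i j"
      using h by (auto simp: Eplus_eq Epoly_def Eminus_def eadd_def)
  qed
  have 2: "snd PM = ?M"
  proof (intro ext)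
    fix i j show "snd PM i j = ?M i j"
      using h by (auto simp: Eplus_eq Epoly_def Eminus_def eadd_def)
  qed
  show "PM = (?P, ?M)" using 1 2 by (simp add: prod_eq_iff)
qed

theorem lemma1:
  shows "ring (Eplus_ring :: 'a::field_char_0 psido ring)
    \<and> (Eplus :: 'a psido set) = Epoly
    \<and> subgroup (Eplus :: 'a psido set) E_addgroup
    \<and> subgroup (Eminus :: 'a psido set) E_addgroup
    \<and> (\<forall>A \<in> (PsiDO :: 'a psido set). \<exists>!PM. fst PM \<in> Eplus \<and> snd PM \<in> Eminus
          \<and> A = eadd (fst PM) (snd PM))"
  using ring_Eplus Eplus_eq subgroup_Eplus subgroup_Eminus decomp by blast

end
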